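(* Let $C$ be an $A$-code of length $l$ having a basis of divisors consisting of one element $g=(g_1,\ldots,g_l)$. Then $C$ is self-dual (i.e. $C=C^\perp$) if and only if either $l=1$ and $f=g_1^2$ in $\mathbb{F}[x]$, or $l=2$, $g_1=1$ and $g_2^2=-1$ in $A$. Also, $C=C^{\perp R}$ if and only if one of the following holds: (1) $l=1$ and $f=g_1^2$ in $\mathbb{F}[x]$; (2) $l=2$, $g_1=0$ and $g_2=1$; (3) $l=2$, $g_1=1$ and $g_2=0$; (4) $l=2$, $\mathrm{char}\,\mathbb{F}=2$, $g_1=1$ and $g_2$ is any element of $A$.
   Context: Let $\mathbb{F}$ be a finite field, $f(x)\in\mathbb{F}[x]$ monic of degree $m$, $A=\mathbb{F}[x]/\langle f(x)\rangle$, elements identified with polynomials of degree $<m$. An $A$-code of length $l$ is an $A$-submodule of $A^l$; $C^\perp=\{a\in A^l:\sum_ia_ic_i=0\ \forall c\in C\}$, and $C^{\perp R}=\{(c_l,\ldots,c_1):(c_1,\ldots,c_l)\in C^\perp\}$. For $u\in A^l$, $L_{\mathrm{ind}}(u)$ is the smallest index of a nonzero entry and $L_{\mathrm{coef}}(u)$ is that entry. For nonzero $C$, $L_{\mathrm{ind}}(C)=\min_{u\in C}L_{\mathrm{ind}}(u)$, $L_{\mathrm{coef}}(C)$ is the monic polynomial $g$ of minimum degree such that some $c\in C$ has $L_{\mathrm{ind}}(c)=L_{\mathrm{ind}}(C)$ and $L_{\mathrm{coef}}(c)=g$ (such $c$ is a leading element). $C^{(1)}=C$, $C^{(n+1)}=\{c\in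 C^{(n)}:L_{\mathrm{ind}}(c)>L_{\mathrm{ind}}(C^{(n)})\}$ while $C^{(n)}\neq0$; with $k$ largest such that $C^{(k)}\neq 0$, a tuple $(g^{(1)},\ldots,g^{(k)})$ with $g^{(j)}$ a leading element of $C^{(j)}$ is a basis of divisors of $C$. *)

theory Defs
  imports "HOL-Computational_Algebra.Polynomial"
begin

text \<open>The ring A = F[x]/(f) is represented by the polynomials of degree < deg f
  (i.e. the remainders modulo f); multiplication is multiplication modulo f.
  Vectors of A^l are lists of length l; index i of the paper is list position i-1.\<close>

definition A_elem :: "'a::field poly \<Rightarrow> 'a poly \<Rightarrow> bool" where
  "A_elem f a \<longleftrightarrow> a mod f = a"

definition A_vec :: "'a::field poly \<Rightarrow> nat \<Rightarrow> 'a poly list set" where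
  "A_vec f l = {u. length u = l \<and> (\<forall>x\<in>set u. A_elem f x)}"

definition A_code :: "'a::field poly \<Rightarrow> nat \<Rightarrow> 'a poly list set \<Rightarrow> bool" where
  "A_code f l C \<longleftrightarrow> C \<subseteq> A_vec f l \<and> replicate l 0 \<in> C
     \<and> (\<forall>u\<in>C. \<forall>v\<in>C. map2 (+) u v \<in> C)
     \<and> (\<forall>a u. A_elem f a \<longrightarrow> u \<in> C \<longrightarrow> map (\<lambda>c. (a * c) mod f) u \<in> C)"

definition A_dot :: "'a::field poly \<Rightarrow> 'a poly list \<Rightarrow> 'a poly list \<Rightarrow> 'a poly" where
  "A_dot f u v = (sum_list (map2 (*) u v)) mod f"

definition dual_code :: "'a::field poly \<Rightarrow> nat \<Rightarrow> 'a poly list set \<Rightarrow> 'a poly list set" where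
  "dual_code f l C = {a \<in> A_vec f l. \<forall>c\<in>C. A_dot f a c = 0}"

definition dualR_code :: "'a::field poly \<Rightarrow> nat \<Rightarrow> 'a poly list set \<Rightarrow> 'a poly list set" where
  "dualR_code f l C = rev ` dual_code f l C"

definition nonzero_vec :: "'a::zero list \<Rightarrow> bool" where
  "nonzero_vec u \<longleftrightarrow> (\<exists>x\<in>set u. x \<noteq> 0)"

definition L_ind :: "'a::zero list \<Rightarrow> nat" where
  "L_ind u = (LEAST i. i < length u \<and> u ! i \<noteq> 0)"

definition L_coef :: "'a::zero list \<Rightarrow> 'a" where
  "L_coef u = u ! L_ind u"

definition L_ind_code :: "'a::zero list set \<Rightarrow> nat" where
  "L_ind_code C = (LEAST i. \<exists>u\<in>C. nonzero_vec u \<and> L_ind u = i)"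

definition leading_elem :: "'a::field poly list set \<Rightarrow> 'a poly list \<Rightarrow> bool" where
  "leading_elem C c \<longleftrightarrow> c \<in> C \<and> nonzero_vec c \<and> L_ind c = L_ind_code C
     \<and> lead_coeff (L_coef c) = 1
     \<and> (\<forall>c'\<in>C. nonzero_vec c' \<longrightarrow> L_ind c' = L_ind_code C \<longrightarrow> lead_coeff (L_coef c') = 1
          \<longrightarrow> degree (L_coef c) \<le> degree (L_coef c'))"

text \<open>code_seq C n is C^(n+1) of the paper.\<close>
fun code_seq :: "'a::zero list set \<Rightarrow> nat \<Rightarrow> 'a list set" where
  "code_seq C 0 = C"
| "code_seq C (Suc n) = {c \<in> code_seq C n. nonzero_vec c \<longrightarrow> L_ind c > L_ind_code (code_seq C n)}"

definition nonzero_code :: "'a::zero list set \<Rightarrow> bool" where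
  "nonzero_code C \<longleftrightarrow> (\<exists>c\<in>C. nonzero_vec c)"

definition basis_of_divisors :: "'a::field poly list set \<Rightarrow> 'a poly list list \<Rightarrow> bool" where
  "basis_of_divisors C gs \<longleftrightarrow> length gs \<ge> 1
     \<and> (\<forall>j < length gs. nonzero_code (code_seq C j))
     \<and> \<not> nonzero_code (code_seq C (length gs))
     \<and> (\<forall>j < length gs. leading_elem (code_seq C j) (gs ! j))"

end

theory Submission
  imports Defs
begin

lemma monic_dvd_antisym:
  fixes p q :: "'a::field poly"
  assumes "lead_coeff p = 1" "lead_coeff q = 1" "p dvd q" "q dvd p" shows "p = q"
proof -
  obtain k where k: "q = p * k" using assms(3) by blast
  have p0: "p \<noteq> 0" "q \<noteq> 0" using assms by auto
  hence k0: "k \<noteq> 0" using k by auto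
  have "degree q \<le> degree p" using assms(4) p0 dvd_imp_degree_le by blast
  moreover have "degree q = degree p + degree k" using k p0 k0 degree_mult_eq by blast
  ultimately have dk: "degree k = 0" by simp
  have "lead_coeff k = 1" using assms k lead_coeff_mult by (metis mult_1)
  hence "k = 1" using dk by (metis degree_0_id one_pCons)
  thus ?thesis using k by simp
qed

lemma sum_map2:
  "length u = length v \<Longrightarrow> sum_list (map2 (*) u v) = (\<Sum>k<length u. u!k * v!k)"
  by (simp add: sum_list_sum_nth atLeast0LessThan)

lemma dot_sc:
  fixes f :: "'a::field poly"
  shows "sum_list (map2 (*) b (map (\<lambda>c. (a*c) mod f) g)) mod f = (a * sum_list (map2 (*) b g)) mod f"
proof (induction b arbitrary: g)
  case Nil then show ?case by simp
next
  case (Cons x b)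
  then show ?case
  proof (cases g)
    case Nil then show ?thesis by simp
  next
    case (Cons y g')
    have "sum_list (map2 (*) (x#b) (map (\<lambda>c. (a*c) mod f) g)) mod f
        = (x * (a*y mod f) + sum_list (map2 (*) b (map (\<lambda>c. (a*c) mod f) g')) mod f) mod f"
      using Cons by (simp add: mod_add_right_eq)
    also have "\<dots> = (x * (a*y mod f) + (a * sum_list (map2 (*) b g')) mod f) mod f"
      using Cons.IH by simp
    also have "\<dots> = (x * (a*y) + (a * sum_list (map2 (*) b g'))) mod f"
      by (rule mod_add_cong[OF mod_mult_right_eq mod_mod_trivial])
    also have "\<dots> = (a * sum_list (map2 (*) (x#b) g)) mod f"
      using Cons by (simp add: algebra_simps)
    finally show ?thesis .
  qed
qed

lemma L_ind_props:
  assumes "nonzero_vec u"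
  shows "L_ind u < length u" "u ! L_ind u \<noteq> 0" "\<And>j. j < L_ind u \<Longrightarrow> u ! j = 0"
proof -
  have ex: "\<exists>k. k < length u \<and> u ! k \<noteq> 0"
    using assms unfolding nonzero_vec_def by (metis in_set_conv_nth)
  have "L_ind u < length u \<and> u ! L_ind u \<noteq> 0"
    unfolding L_ind_def using LeastI_ex[OF ex] .
  thus "L_ind u < length u" "u ! L_ind u \<noteq> 0" by auto
  fix j assume j: "j < L_ind u"
  hence "\<not> (j < length u \<and> u ! j \<noteq> 0)" unfolding L_ind_def by (rule not_less_Least)
  thus "u ! j = 0" using j \<open>L_ind u < length u\<close> by auto
qed

definition sc :: "'a::field poly \<Rightarrow> 'a poly \<Rightarrow> 'a poly list \<Rightarrow> 'a poly list" where
  "sc f a u = map (\<lambda>c. (a*c) mod f) u"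

locale bd =
  fixes f :: "'a::field poly" and l :: nat and C :: "'a poly list set" and g :: "'a poly list"
  assumes monic: "lead_coeff f = 1"
    and code: "A_code f l C"
    and basis: "basis_of_divisors C [g]"
begin

abbreviation "i \<equiv> L_ind_code C"
abbreviation "h \<equiv> g ! i"

lemma f0: "f \<noteq> 0" using monic by auto

lemma C_vec: "c \<in> C \<Longrightarrow> length c = l \<and> (\<forall>x\<in>set c. A_elem f x)"
  using code unfolding A_code_def A_vec_def by auto

lemma C_add: "u \<in> C \<Longrightarrow> v \<in> C \<Longrightarrow> map2 (+) u v \<in> C"
  using code unfolding A_code_def by auto

lemma C_smul: "A_elem f a \<Longrightarrow> u \<in> C \<Longrightarrow> sc f a u \<in> C"
  using code unfolding A_code_def sc_def by auto

lemma nzC: "nonzero_code C" using basis unfolding basis_of_divisors_def by auto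

lemma lead_g: "leading_elem C g" using basis unfolding basis_of_divisors_def by auto

lemma g_props: "g \<in> C" "nonzero_vec g" "L_ind g = i" "lead_coeff h = 1"
  using lead_g unfolding leading_elem_def L_coef_def by auto

lemma g_min: "c \<in> C \<Longrightarrow> nonzero_vec c \<Longrightarrow> L_ind c = i \<Longrightarrow> lead_coeff (c!i) = 1 \<Longrightarrow> degree h \<le> degree (c!i)"
  using lead_g unfolding leading_elem_def L_coef_def by (metis g_props(3))

lemma nz_ind: assumes "c \<in> C" "nonzero_vec c" shows "L_ind c = i"
proof -
  have "i \<le> L_ind c" unfolding L_ind_code_def using assms by (intro Least_le) auto
  moreover have "\<not> nonzero_code (code_seq C 1)" using basis unfolding basis_of_divisors_def by auto
  hence "\<not> (L_ind c > i)" using assms unfolding nonzero_code_def by auto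
  ultimately show ?thesis by simp
qed

lemma len_g: "length g = l" using C_vec g_props(1) by auto
lemma i_less: "i < l" using L_ind_props(1)[OF g_props(2)] g_props(3) len_g by simp
lemma g_before: "j < i \<Longrightarrow> g ! j = 0" using L_ind_props(3)[OF g_props(2)] g_props(3) by simp
lemma h0: "h \<noteq> 0" using g_props(4) by auto

lemma c_nz_i: "c \<in> C \<Longrightarrow> nonzero_vec c \<Longrightarrow> c ! i \<noteq> 0"
  using nz_ind L_ind_props(2) by metis

lemma c_zero: assumes "c \<in> C" "c ! i = 0" shows "\<forall>j<l. c ! j = 0"
proof -
  have "\<not> nonzero_vec c" using c_nz_i assms by auto
  thus ?thesis using C_vec[OF assms(1)] unfolding nonzero_vec_def by auto
qed

lemma degf: "degree f \<ge> 1"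
proof (rule ccontr)
  assume "\<not> 1 \<le> degree f"
  hence "degree f = 0" by simp
  hence "f = 1" using monic by (metis degree_0_id one_pCons)
  hence "\<forall>c\<in>C. \<forall>x\<in>set c. x = 0" using C_vec unfolding A_elem_def by auto
  thus False using nzC unfolding nonzero_code_def nonzero_vec_def by auto
qed

lemma A_elem_iff: "A_elem f a \<longleftrightarrow> degree a < degree f"
proof
  assume "A_elem f a"
  hence "a = a mod f" unfolding A_elem_def by simp
  thus "degree a < degree f" using degree_mod_less[OF f0, of a] degf by (cases "a = 0") auto
next
  assume "degree a < degree f" thus "A_elem f a" unfolding A_elem_def by (rule mod_poly_less)
qed

lemma C_elem: "c \<in> C \<Longrightarrow> j < l \<Longrightarrow> degree (c ! j) < degree f"
  using C_vec A_elem_iff by (metis nth_mem)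

lemma sc_in: "sc f a g \<in> C"
proof -
  have "sc f a g = sc f (a mod f) g" unfolding sc_def by (simp add: mod_mult_left_eq)
  moreover have "A_elem f (a mod f)" unfolding A_elem_def by simp
  ultimately show ?thesis using C_smul g_props(1) by simp
qed

lemma degh: "degree h < degree f" using C_elem[OF g_props(1) i_less] .

lemma small_mod: "degree x < degree f \<Longrightarrow> x mod f = x" by (rule mod_poly_less)

lemma deg_diff: "degree (x::'a poly) < degree f \<Longrightarrow> degree y < degree f \<Longrightarrow> degree (x - y) < degree f"
  using degree_diff_le_max[of x y] by linarith

lemma M: assumes c: "c \<in> C" shows "h dvd c ! i"
proof (rule ccontr)
  assume nd: "\<not> h dvd c ! i"
  define q where "q = c ! i div h"
  define r where "r = c ! i mod h"
  have r0: "r \<noteq> 0" using nd unfolding r_def by (simp add: mod_eq_0_iff_dvd)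
  have degr: "degree r < degree h" using degree_mod_less[OF h0, of "c!i"] r0 unfolding r_def by auto
  have cq: "c ! i = q * h + r" unfolding q_def r_def by (simp add: div_mult_mod_eq)
  define d where "d = map2 (+) c (sc f ((-q) mod f) g)"
  have dC: "d \<in> C" unfolding d_def using C_add c sc_in by blast
  have lc: "length c = l" using C_vec c by auto
  have degci: "degree (c ! i) < degree f" using C_elem c i_less by blast
  have "((-q) mod f * h) mod f = ((-q) * h) mod f" by (simp add: mod_mult_left_eq)
  also have "(-q) * h = r - c ! i" using cq by (simp add: algebra_simps)
  also have "(r - c ! i) mod f = r - c ! i"
    using degr degh degci deg_diff by (intro small_mod) (meson deg_diff less_trans)
  finally have "d ! i = r" unfolding d_def sc_def using lc len_g i_less by simp
  hence dnz: "nonzero_vec d" using dC C_vec i_less unfolding nonzero_vec_def by (metis nth_mem r0)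
  define e where "e = sc f [:inverse (lead_coeff r):] d"
  have eC: "e \<in> C" unfolding e_def by (rule C_smul[OF _ dC]) (use degf in \<open>simp add: A_elem_iff\<close>)
  have ld: "length d = l" using C_vec dC by auto
  have "e ! i = smult (inverse (lead_coeff r)) r mod f" unfolding e_def sc_def using ld i_less \<open>d ! i = r\<close> by simp
  also have "\<dots> = smult (inverse (lead_coeff r)) r"
    using degr degh by (intro small_mod) simp
  finally have ei: "e ! i = smult (inverse (lead_coeff r)) r" .
  have ei0: "e ! i \<noteq> 0" using ei r0 by simp
  have enz: "nonzero_vec e" using eC C_vec i_less ei0 unfolding nonzero_vec_def by (metis nth_mem)
  have "degree h \<le> degree (e ! i)"
    using g_min[OF eC enz nz_ind[OF eC enz]] ei r0 by simp
  thus False using ei degr r0 by simp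
qed

lemma neg_small: "degree x < degree f \<Longrightarrow> (-x) mod f = -x" by (rule small_mod) simp

lemma h_dvd_f: "h dvd f"
proof -
  have "h dvd (f div h * h) mod f" using M[OF sc_in[of "f div h"]] unfolding sc_def using len_g i_less by simp
  moreover have "f div h * h = f - f mod h" by (simp add: algebra_simps)
  moreover have "(f - f mod h) mod f = - (f mod h)"
  proof -
    have "(f - f mod h) mod f = (- (f mod h)) mod f" by (simp add: mod_diff_left_eq[symmetric])
    also have "\<dots> = - (f mod h)"
      using degree_mod_less[OF h0, of f] degh by (intro neg_small) auto
    finally show ?thesis .
  qed
  ultimately have "h dvd f mod h" by simp
  hence "f mod h = 0"
    using degree_mod_less[OF h0, of f] dvd_imp_degree_le[of h "f mod h"] by fastforce
  thus ?thesis by (simp add: mod_eq_0_iff_dvd)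
qed

lemma K: assumes c: "c \<in> C" shows "c = sc f (c ! i div h) g"
proof -
  define q where "q = c ! i div h"
  have cq: "c ! i = q * h" unfolding q_def using M[OF c] by simp
  define e where "e = map2 (+) c (sc f ((-q) mod f) g)"
  have eC: "e \<in> C" unfolding e_def using C_add c sc_in by blast
  have lc: "length c = l" using C_vec c by auto
  have key: "e ! j = c ! j - (q * g ! j) mod f" if j: "j < l" for j
  proof -
    have "e ! j = c ! j + ((-q) mod f * g ! j) mod f"
      unfolding e_def sc_def using lc len_g j by simp
    also have "((-q) mod f * g ! j) mod f = (- (q * g ! j)) mod f"
      by (simp add: mod_mult_left_eq)
    also have "\<dots> = - ((q * g ! j) mod f)" by (rule poly_mod_minus_left)
    finally show ?thesis by simp
  qed
  have degci: "degree (c ! i) < degree f" using C_elem c i_less by blast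
  have "e ! i = 0" using key[OF i_less] cq[symmetric] small_mod[OF degci] by simp
  hence "\<forall>j<l. e ! j = 0" using c_zero eC by blast
  hence "\<And>j. j < l \<Longrightarrow> c ! j = (q * g ! j) mod f" using key by auto
  thus ?thesis unfolding sc_def q_def[symmetric] using lc len_g by (intro nth_equalityI) auto
qed

lemma C_eq: "C = range (\<lambda>a. sc f a g)"
  using K sc_in by blast

lemma h_dvd_g: assumes j: "j < l" shows "h dvd g ! j"
proof -
  have z: "\<forall>j<l. sc f (f div h) g ! j = 0"
    using c_zero[OF sc_in] unfolding sc_def using len_g i_less h_dvd_f
    by (simp add: dvd_div_mult_self)
  hence "f dvd (f div h) * g ! j" using j len_g unfolding sc_def by (simp add: mod_eq_0_iff_dvd)
  hence "(f div h) * h dvd (f div h) * g ! j" using h_dvd_f by (simp add: dvd_div_mult_self)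
  moreover have "f div h \<noteq> 0" using f0 h_dvd_f by auto
  ultimately show ?thesis by (simp add: mult.commute[of "f div h" h])
qed

lemma dual_eq: "dual_code f l C = {b \<in> A_vec f l. A_dot f b g = 0}"
proof -
  have "\<And>b. (\<forall>c\<in>C. A_dot f b c = 0) \<longleftrightarrow> A_dot f b g = 0"
  proof
    fix b assume "\<forall>c\<in>C. A_dot f b c = 0" thus "A_dot f b g = 0" using g_props(1) by auto
  next
    fix b assume a: "A_dot f b g = 0"
    show "\<forall>c\<in>C. A_dot f b c = 0"
    proof
      fix c assume "c \<in> C"
      then obtain a where "c = sc f a g" using C_eq by auto
      hence "A_dot f b c = (a * sum_list (map2 (*) b g)) mod f"
        unfolding A_dot_def sc_def by (simp add: dot_sc)
      also have "\<dots> = (a * (sum_list (map2 (*) b g) mod f)) mod f" by (simp add: mod_mult_right_eq)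
      finally show "A_dot f b c = 0" using a unfolding A_dot_def by simp
    qed
  qed
  thus ?thesis unfolding dual_code_def by blast
qed

definition vv :: "nat \<Rightarrow> nat \<Rightarrow> nat \<Rightarrow> 'a poly \<Rightarrow> 'a poly \<Rightarrow> 'a poly list" where
  "vv n j j' x y = map (\<lambda>k. if k = j then x else if k = j' then y else 0) [0..<n]"

lemma vv_dot: assumes "j < l" "j' < l" "j \<noteq> j'"
  shows "sum_list (map2 (*) (vv l j j' x y) g) = x * g ! j + y * g ! j'"
proof -
  have "sum_list (map2 (*) (vv l j j' x y) g) = (\<Sum>k<l. vv l j j' x y ! k * g ! k)"
    using sum_map2[of "vv l j j' x y" g] len_g unfolding vv_def by simp
  also have "\<dots> = (\<Sum>k<l. (if k = j then x * g ! j else 0) + (if k = j' then y * g ! j' else 0))"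
    using assms unfolding vv_def by (intro sum.cong) auto
  also have "\<dots> = x * g ! j + y * g ! j'"
    using assms by (simp add: sum.distrib)
  finally show ?thesis .
qed

lemma exists_dual_zero: assumes l3: "l \<ge> 3" and p: "p < l"
  shows "\<exists>b\<in>dual_code f l C. nonzero_vec b \<and> b ! p = 0"
proof -
  define j where "j = (if p = 0 then 1 else 0::nat)"
  define j' where "j' = (if p \<le> 1 then 2 else 1::nat)"
  have jj: "j < l" "j' < l" "j \<noteq> j'" "p \<noteq> j" "p \<noteq> j'" using l3 unfolding j_def j'_def by auto
  define x where "x = (if g ! j = 0 then 1 else g ! j')"
  define y where "y = (if g ! j = 0 then 0 else - g ! j)"
  define b where "b = vv l j j' x y"
  have dx: "degree x < degree f" unfolding x_def using degf C_elem[OF g_props(1) jj(2)] by auto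
  have dy: "degree y < degree f" unfolding y_def using degf C_elem[OF g_props(1) jj(1)] by auto
  have bvec: "b \<in> A_vec f l" unfolding b_def vv_def A_vec_def using dx dy degf
    by (auto simp: A_elem_iff)
  have "A_dot f b g = 0" unfolding A_dot_def b_def vv_dot[OF jj(1-3)]
    unfolding x_def y_def by (auto simp: algebra_simps)
  hence bd: "b \<in> dual_code f l C" unfolding dual_eq using bvec by simp
  have "b ! j = x" "b ! j' = y" unfolding b_def vv_def using jj by auto
  moreover have "length b = l" using bvec unfolding A_vec_def by simp
  ultimately have "nonzero_vec b" unfolding nonzero_vec_def using jj
    unfolding x_def y_def by (cases "g ! j = 0") (metis nth_mem one_neq_zero, metis nth_mem neg_equal_0_iff_equal)
  moreover have "b ! p = 0" unfolding b_def vv_def using jj p by auto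
  ultimately show ?thesis using bd by blast
qed

lemma l3_not_dual: "l \<ge> 3 \<Longrightarrow> C \<noteq> dual_code f l C"
  using exists_dual_zero[OF _ i_less] c_nz_i by blast

lemma l3_not_dualR: assumes "l \<ge> 3" shows "C \<noteq> dualR_code f l C"
proof
  assume eq: "C = dualR_code f l C"
  have p: "l - 1 - i < l" using i_less by simp
  obtain b where b: "b \<in> dual_code f l C" "nonzero_vec b" "b ! (l - 1 - i) = 0"
    using exists_dual_zero[OF assms p] by blast
  have lb: "length b = l" using b(1) unfolding dual_code_def A_vec_def by auto
  have "rev b \<in> C" using eq b(1) unfolding dualR_code_def by blast
  moreover have "nonzero_vec (rev b)" using b(2) unfolding nonzero_vec_def by simp
  moreover have "rev b ! i = 0" using b(3) lb i_less by (simp add: rev_nth)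
  ultimately show False using c_nz_i by blast
qed

lemma A_vec1: "[x] \<in> A_vec f 1 \<longleftrightarrow> degree x < degree f"
  unfolding A_vec_def by (simp add: A_elem_iff)

lemma len1: "length u = 1 \<Longrightarrow> u = [u ! 0]" by (cases u) auto

lemma l1_R: assumes "l = 1" shows "dualR_code f l C = dual_code f l C"
proof -
  have "\<forall>b\<in>dual_code f l C. rev b = b" using assms unfolding dual_code_def A_vec_def
    by (auto dest: len1 simp del: One_nat_def) (metis len1 rev_singleton_conv)
  thus ?thesis unfolding dualR_code_def by (metis (no_types, lifting) image_cong image_ident)
qed

lemma l1: assumes l1: "l = 1" shows "C = dual_code f l C \<longleftrightarrow> f = (g ! 0)^2"
proof -
  have i0: "i = 0" using i_less l1 by simp
  obtain u where gu: "g = [u]" using len_g l1 len1 by metis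
  have hu: "h = u" using gu i0 by simp
  have u0: "u \<noteq> 0" using h0 hu by simp
  have ulc: "lead_coeff u = 1" using g_props(4) hu by simp
  have uf: "u dvd f" using h_dvd_f hu by simp
  have Mu: "\<And>c. c \<in> C \<Longrightarrow> u dvd c ! 0" using M hu i0 by metis
  show ?thesis unfolding gu nth_Cons_0
  proof
    assume eq: "C = dual_code f l C"
    have "g \<in> dual_code f l C" using eq g_props(1) by simp
    hence hh: "(u * u) mod f = 0" unfolding dual_eq A_dot_def using gu by simp
    have dh: "degree u \<ge> 1"
    proof (rule ccontr)
      assume "\<not> 1 \<le> degree u"
      hence "degree u = 0" by simp
      hence "u = 1" using ulc by (metis degree_0_id one_pCons)
      thus False using hh degf by (simp add: small_mod)
    qed
    define k where "k = f div u"
    have fk: "f = u * k" unfolding k_def using uf by simp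
    have k0: "k \<noteq> 0" using fk f0 by auto
    have dk: "degree k < degree f" using fk dh k0 u0 by (simp add: degree_mult_eq)
    have "A_dot f [k] g = (k * u) mod f" unfolding gu A_dot_def by simp
    also have "\<dots> = 0" using fk by (simp add: mult.commute)
    finally have "[k] \<in> dual_code f l C" unfolding dual_eq using l1 A_vec1 dk by simp
    hence "[k] \<in> C" using eq by simp
    hence "u dvd k" using Mu by fastforce
    hence "u * u dvd f" using fk by simp
    moreover have "f dvd u * u" using hh by (simp add: mod_eq_0_iff_dvd)
    moreover have "lead_coeff (u * u) = 1" using ulc by (simp add: lead_coeff_mult)
    ultimately have "f = u * u" using monic by (intro monic_dvd_antisym) auto
    thus "f = u^2" by (simp add: power2_eq_square)
  next
    assume fh: "f = u^2"
    hence fh': "f = u * u" by (simp add: power2_eq_square)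
    show "C = dual_code f l C" unfolding dual_eq
    proof (subst C_eq, intro equalityI subsetI)
      fix b assume "b \<in> range (\<lambda>a. sc f a g)"
      then obtain a where b: "b = [(a * u) mod f]" using gu unfolding sc_def by auto
      have "A_elem f ((a * u) mod f)" by (simp add: A_elem_def)
      hence "b \<in> A_vec f l" unfolding b l1 A_vec1 A_elem_iff .
      moreover have "A_dot f b g = ((a * u) mod f * u) mod f" unfolding A_dot_def b gu by simp
      moreover have "\<dots> = (a * (u * u)) mod f" by (simp add: mod_mult_left_eq mult.assoc)
      moreover have "\<dots> = 0" using fh' by simp
      ultimately show "b \<in> {b \<in> A_vec f l. A_dot f b g = 0}" by simp
    next
      fix b assume "b \<in> {b \<in> A_vec f l. A_dot f b g = 0}"
      hence bv: "b \<in> A_vec f l" and bd: "A_dot f b g = 0" by auto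
      have "length b = 1" using bv l1 by (simp add: A_vec_def)
      then obtain b0 where b: "b = [b0]" by (cases b) auto
      have db: "degree b0 < degree f" using bv unfolding b l1 A_vec1 .
      have "A_dot f b g = (b0 * u) mod f" unfolding b gu A_dot_def by simp
      hence "f dvd b0 * u" using bd by (simp add: mod_eq_0_iff_dvd)
      hence "u * u dvd b0 * u" using fh' by simp
      hence "u * u dvd u * b0" by (simp add: mult.commute)
      hence "u dvd b0" using u0 dvd_times_left_cancel_iff by blast
      then obtain t where t: "b0 = u * t" by blast
      have "sc f t g = [(t * u) mod f]" using gu unfolding sc_def by simp
      also have "\<dots> = b" using t db b small_mod by (simp add: mult.commute)
      finally show "b \<in> range (\<lambda>a. sc f a g)" by (rule range_eqI[OF sym])
    qed
  qed
qed

lemma A_vec2: "[x, y] \<in> A_vec f 2 \<longleftrightarrow> degree x < degree f \<and> degree y < degree f"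
  unfolding A_vec_def by (simp add: A_elem_iff)

lemma A_vec2_E: assumes "b \<in> A_vec f 2"
  obtains x y where "b = [x, y]" "degree x < degree f" "degree y < degree f"
proof -
  have "length b = 2" using assms unfolding A_vec_def by simp
  then obtain x y where b: "b = [x, y]"
    by (metis (no_types, lifting) Suc_length_conv length_0_conv numeral_2_eq_2)
  thus ?thesis using that assms A_vec2 by blast
qed

lemma mod_deg: "degree (x mod f) < degree f"
  using degree_mod_less[OF f0, of x] degf by auto

lemma modlem1: "(x mod f + (y mod f) * z) mod f = (x + y * z) mod f"
  by (rule mod_add_cong[OF mod_mod_trivial mod_mult_left_eq])

lemma h_dvd_1: "h dvd 1 \<Longrightarrow> h = 1"
proof -
  assume "h dvd 1"
  hence "degree h = 0" using dvd_imp_degree_le[of h 1] by simp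
  thus "h = 1" using g_props(4) by (metis degree_0_id one_pCons)
qed

lemma unit_helper: assumes l2: "l = 2" and i0: "i = 0" and xC: "[x, 1] \<in> C" shows "g ! 0 = 1"
proof -
  obtain g0 g1 where gg: "g = [g0, g1]" using len_g l2
    by (metis (no_types, lifting) Suc_length_conv length_0_conv numeral_2_eq_2)
  obtain a where "[x, 1] = sc f a g" using xC C_eq by auto
  hence "(a * g1) mod f = 1 mod f" using gg degf unfolding sc_def by (simp add: small_mod)
  hence "f dvd a * g1 - 1" by (simp add: mod_eq_dvd_iff)
  hence d1: "h dvd a * g1 - 1" using h_dvd_f dvd_trans by blast
  have "h dvd g1" using h_dvd_g[of 1] l2 gg by simp
  hence "h dvd a * g1" by simp
  hence "h dvd a * g1 - (a * g1 - 1)" using d1 dvd_diff by blast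
  hence "h = 1" using h_dvd_1 by simp
  thus ?thesis using i0 by simp
qed

lemma l2a: assumes l2: "l = 2"
  shows "C = dual_code f l C \<longleftrightarrow> g ! 0 = 1 \<and> ((g ! 1)^2) mod f = (-1) mod f"
proof -
  obtain g0 g1 where gg: "g = [g0, g1]" using len_g l2
    by (metis (no_types, lifting) Suc_length_conv length_0_conv numeral_2_eq_2)
  have dg1: "degree g1 < degree f" using C_elem[OF g_props(1), of 1] gg l2 by simp
  have n01: "g ! 0 = g0" "g ! 1 = g1" using gg by auto
  show ?thesis unfolding n01
  proof
    assume eq: "C = dual_code f l C"
    have i0: "i = 0"
    proof (rule ccontr)
      assume "i \<noteq> 0"
      hence i1: "i = 1" using i_less l2 by simp
      hence "g0 = 0" using g_before[of 0] gg by simp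
      hence "[1, 0] \<in> dual_code f l C" unfolding dual_eq A_dot_def gg using degf l2 A_vec2 by simp
      hence "[1, 0] \<in> C" using eq by simp
      moreover have "nonzero_vec [1, 0::'a poly]" unfolding nonzero_vec_def by simp
      ultimately show False using c_nz_i i1 by fastforce
    qed
    hence hg0: "h = g0" using gg by simp
    obtain w where w: "g1 = g0 * w" using h_dvd_g[of 1] l2 gg hg0 by auto
    have "A_dot f [(-w) mod f, 1] g = (((-w) mod f) * g0 + 1 * g1) mod f" unfolding A_dot_def gg by simp
    also have "\<dots> = ((-w) * g0 + g1) mod f"
    proof -
      have m: "((-w) mod f * g0) mod f = ((-w) * g0) mod f" by (rule mod_mult_left_eq)
      show ?thesis by (rule mod_add_cong[OF m]) simp
    qed
    also have "\<dots> = 0" using w by (simp add: algebra_simps)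
    finally have "[(-w) mod f, 1] \<in> dual_code f l C" unfolding dual_eq using l2 A_vec2 mod_deg degf by simp
    hence "[(-w) mod f, 1] \<in> C" using eq by simp
    hence g01: "g0 = 1" using unit_helper[OF l2 i0] gg by simp
    have "g \<in> dual_code f l C" using eq g_props(1) by simp
    hence "(g0 * g0 + g1 * g1) mod f = 0" unfolding dual_eq A_dot_def gg by simp
    hence "f dvd g1^2 - (-1)" using g01 by (simp add: mod_eq_0_iff_dvd power2_eq_square add.commute)
    hence "g1^2 mod f = (-1) mod f" by (subst mod_eq_dvd_iff)
    thus "g0 = 1 \<and> g1^2 mod f = (-1) mod f" using g01 by simp
  next
    assume "g0 = 1 \<and> g1^2 mod f = (-1) mod f"
    hence g01: "g0 = 1" and "g1^2 mod f = (-1) mod f" by auto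
    hence "f dvd g1^2 - (-1)" by (subst mod_eq_dvd_iff[symmetric])
    hence D: "f dvd g1^2 + 1" by simp
    show "C = dual_code f l C" unfolding dual_eq
    proof (subst C_eq, intro equalityI subsetI)
      fix b assume "b \<in> range (\<lambda>a. sc f a g)"
      then obtain a where b: "b = [a mod f, (a * g1) mod f]" using gg g01 unfolding sc_def by auto
      have "b \<in> A_vec f l" unfolding b l2 A_vec2 using mod_deg by simp
      moreover have "A_dot f b g = (a mod f + ((a * g1) mod f) * g1) mod f" unfolding A_dot_def b gg g01 by simp
      moreover have "\<dots> = (a + (a * g1) * g1) mod f" by (rule modlem1)
      moreover have "\<dots> = (a * (g1^2 + 1)) mod f" by (simp add: algebra_simps power2_eq_square)
      moreover have "\<dots> = 0" using D by (simp add: mod_eq_0_iff_dvd)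
      ultimately show "b \<in> {b \<in> A_vec f l. A_dot f b g = 0}" by simp
    next
      fix b assume "b \<in> {b \<in> A_vec f l. A_dot f b g = 0}"
      hence bv: "b \<in> A_vec f 2" and bd: "A_dot f b g = 0" using l2 by auto
      obtain x y where b: "b = [x, y]" and dx: "degree x < degree f" and dy: "degree y < degree f"
        using A_vec2_E[OF bv] by blast
      have "(x * 1 + y * g1) mod f = 0" using bd unfolding b gg g01 A_dot_def by simp
      hence E: "f dvd x + y * g1" by (simp add: mod_eq_0_iff_dvd)
      have "x * g1 - y = g1 * (x + y * g1) - y * (g1^2 + 1)" by (simp add: algebra_simps power2_eq_square)
      hence "f dvd x * g1 - y" using E D by (simp add: dvd_diff)
      hence "(x * g1) mod f = y" using small_mod[OF dy] by (metis mod_eq_dvd_iff)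
      hence "sc f x g = b" unfolding sc_def gg g01 b using small_mod[OF dx] by simp
      thus "b \<in> range (\<lambda>a. sc f a g)" by (rule range_eqI[OF sym])
    qed
  qed
qed

lemma dualR_mem: "b \<in> dualR_code f l C \<longleftrightarrow> rev b \<in> dual_code f l C"
  unfolding dualR_code_def by (metis image_iff rev_rev_ident)

lemma dualR2: assumes l2: "l = 2" and gg: "g = [g0, g1]"
  shows "[x, y] \<in> dualR_code f l C \<longleftrightarrow> degree x < degree f \<and> degree y < degree f \<and> (y * g0 + x * g1) mod f = 0"
  unfolding dualR_mem dual_eq using l2 A_vec2 gg unfolding A_dot_def by auto

lemma dualR2_E: assumes l2: "l = 2" and b: "b \<in> dualR_code f l C"
  obtains x y where "b = [x, y]"
proof -
  have "rev b \<in> A_vec f 2" using b l2 unfolding dualR_mem dual_code_def by simp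
  then obtain x y where "rev b = [x, y]" using A_vec2_E by metis
  hence "b = [y, x]" by (metis rev_rev_ident rev_singleton_conv rev.simps(2) append_Cons append_Nil)
  thus ?thesis using that by blast
qed

end

lemma char2: fixes p :: "'a::field poly" assumes "p + p = 0" "p \<noteq> 0" shows "CHAR('a) = 2"
proof -
  obtain n where n: "coeff p n \<noteq> 0" using assms(2) by (metis leading_coeff_0_iff)
  have "coeff (p + p) n = 0" unfolding assms(1) by simp
  hence "coeff p n + coeff p n = 0" by (simp only: coeff_add)
  hence "2 * coeff p n = 0" by (simp only: mult_2)
  hence two: "(2 :: 'a) = 0" using n by simp
  show ?thesis
  proof (rule CHAR_eq_posI)
    show "of_nat 2 = (0::'a)" using two by simp
    fix x :: nat assume "0 < x" "x < 2"
    hence "x = 1" by simp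
    thus "of_nat x \<noteq> (0::'a)" by simp
  qed simp
qed

lemma char2_double: fixes p :: "'a::field poly" assumes "CHAR('a) = 2" shows "p + p = 0"
proof (rule poly_eqI)
  fix n
  have "- coeff p n = coeff p n" using uminus_CHAR_2[OF assms] .
  hence "coeff p n + coeff p n = 0" by (metis add.left_inverse)
  thus "coeff (p + p) n = coeff 0 n" by (simp only: coeff_add coeff_0)
qed

context bd begin

lemma l2b: assumes l2: "l = 2"
  shows "C = dualR_code f l C \<longleftrightarrow> (g ! 0 = 0 \<and> g ! 1 = 1) \<or> (g ! 0 = 1 \<and> g ! 1 = 0) \<or> (CHAR('a) = 2 \<and> g ! 0 = 1)"
proof -
  obtain g0 g1 where gg: "g = [g0, g1]" using len_g l2
    by (metis (no_types, lifting) Suc_length_conv length_0_conv numeral_2_eq_2)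
  have dg1: "degree g1 < degree f" using C_elem[OF g_props(1), of 1] gg l2 by simp
  have n01: "g ! 0 = g0" "g ! 1 = g1" using gg by auto
  note DR = dualR2[OF l2 gg]
  have Csc: "c \<in> C \<longleftrightarrow> (\<exists>a. c = [(a * g0) mod f, (a * g1) mod f])" for c
    using C_eq gg unfolding sc_def by auto
  have i01: "i = 0 \<or> i = 1" using i_less l2 by auto
  show ?thesis unfolding n01
  proof (cases "i = 1")
    case i1: True
    have g00: "g0 = 0" using g_before[of 0] gg i1 by simp
    have hg1: "h = g1" using i1 gg by simp
    show "C = dualR_code f l C \<longleftrightarrow> (g0 = 0 \<and> g1 = 1) \<or> (g0 = 1 \<and> g1 = 0) \<or> (CHAR('a) = 2 \<and> g0 = 1)"
    proof
      assume eq: "C = dualR_code f l C"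
      have "[0, 1] \<in> dualR_code f l C" using DR degf g00 by simp
      hence "[0, 1] \<in> C" using eq by simp
      hence "h dvd 1" using M i1 by fastforce
      hence "g1 = 1" using h_dvd_1 hg1 by simp
      thus "(g0 = 0 \<and> g1 = 1) \<or> (g0 = 1 \<and> g1 = 0) \<or> (CHAR('a) = 2 \<and> g0 = 1)" using g00 by simp
    next
      assume "(g0 = 0 \<and> g1 = 1) \<or> (g0 = 1 \<and> g1 = 0) \<or> (CHAR('a) = 2 \<and> g0 = 1)"
      hence g11: "g1 = 1" using g00 by auto
      show "C = dualR_code f l C"
      proof (intro equalityI subsetI)
        fix c assume "c \<in> C"
        then obtain a where c: "c = [0, a mod f]" using Csc g00 g11 by auto
        show "c \<in> dualR_code f l C" unfolding c DR using mod_deg degf g00 by simp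
      next
        fix b assume b: "b \<in> dualR_code f l C"
        then obtain x y where bxy: "b = [x, y]" using dualR2_E[OF l2] by blast
        hence "degree x < degree f" "degree y < degree f" "x mod f = 0" using b DR g00 g11 by auto
        hence "x = 0" "y mod f = y" using small_mod by auto
        hence "b = [(y * g0) mod f, (y * g1) mod f]" using bxy g00 g11 by simp
        thus "b \<in> C" using Csc by blast
      qed
    qed
  next
    case False
    hence i0: "i = 0" using i01 by simp
    have hg0: "h = g0" using i0 gg by simp
    show "C = dualR_code f l C \<longleftrightarrow> (g0 = 0 \<and> g1 = 1) \<or> (g0 = 1 \<and> g1 = 0) \<or> (CHAR('a) = 2 \<and> g0 = 1)"
    proof
      assume eq: "C = dualR_code f l C"
      obtain w where w: "g1 = g0 * w" using h_dvd_g[of 1] l2 gg hg0 by auto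
      have "(((-w) mod f) * g0 + 1 * g1) mod f = ((-w) * g0 + g1) mod f"
      proof -
        have m: "((-w) mod f * g0) mod f = ((-w) * g0) mod f" by (rule mod_mult_left_eq)
        show ?thesis by (rule mod_add_cong[OF m]) simp
      qed
      also have "\<dots> = 0" using w by (simp add: algebra_simps)
      finally have "[1, (-w) mod f] \<in> dualR_code f l C" unfolding DR using mod_deg degf by simp
      hence "[1, (-w) mod f] \<in> C" using eq by simp
      hence "h dvd 1" using M i0 by fastforce
      hence g01: "g0 = 1" using h_dvd_1 hg0 by simp
      have "g \<in> dualR_code f l C" using eq g_props(1) by simp
      hence "(g1 * 1 + 1 * g1) mod f = 0" using DR gg g01 by simp
      moreover have "degree (g1 + g1) < degree f" using dg1 degree_add_le_max[of g1 g1] by simp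
      ultimately have "g1 + g1 = 0" using small_mod by simp
      hence "g1 = 0 \<or> CHAR('a) = 2" using char2 by blast
      thus "(g0 = 0 \<and> g1 = 1) \<or> (g0 = 1 \<and> g1 = 0) \<or> (CHAR('a) = 2 \<and> g0 = 1)" using g01 by auto
    next
      assume asm: "(g0 = 0 \<and> g1 = 1) \<or> (g0 = 1 \<and> g1 = 0) \<or> (CHAR('a) = 2 \<and> g0 = 1)"
      have "g0 \<noteq> 0" using h0 hg0 by simp
      hence g01: "g0 = 1" using asm by auto
      have gd: "g1 + g1 = 0"
      proof (cases "g1 = 0")
        case False thus ?thesis using asm char2_double[of g1] \<open>g0 \<noteq> 0\<close> by auto
      qed simp
      show "C = dualR_code f l C"
      proof (intro equalityI subsetI)
        fix c assume "c \<in> C"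
        then obtain a where c: "c = [a mod f, (a * g1) mod f]" using Csc g01 by auto
        have "((a * g1) mod f * 1 + (a mod f) * g1) mod f = (a * g1 + a * g1) mod f"
          using modlem1[of "a * g1" a g1] by simp
        also have "\<dots> = (a * (g1 + g1)) mod f" by (simp add: algebra_simps)
        also have "\<dots> = 0" unfolding gd by simp
        finally show "c \<in> dualR_code f l C" unfolding c DR using mod_deg g01 by simp
      next
        fix b assume b: "b \<in> dualR_code f l C"
        then obtain x y where bxy: "b = [x, y]" using dualR2_E[OF l2] by blast
        hence dx: "degree x < degree f" and dy: "degree y < degree f" and "(y * 1 + x * g1) mod f = 0"
          using b DR g01 by auto
        hence E: "f dvd y + x * g1" by (simp add: mod_eq_0_iff_dvd)
        have "x * g1 - y = x * (g1 + g1) - (y + x * g1)" by (simp add: algebra_simps)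
        hence "x * g1 - y = - (y + x * g1)" unfolding gd by simp
        hence "f dvd x * g1 - y" using E by (simp only: dvd_minus_iff)
        hence "(x * g1) mod f = y" using small_mod[OF dy] by (metis mod_eq_dvd_iff)
        hence "b = [(x * g0) mod f, (x * g1) mod f]" using bxy g01 small_mod[OF dx] by simp
        thus "b \<in> C" using Csc by blast
      qed
    qed
  qed
qed

end

theorem mainTheorem4:
  fixes f :: "'a::{field,finite} poly" and l :: nat
    and C :: "'a poly list set" and g :: "'a poly list"
  assumes "lead_coeff f = 1"
    and "A_code f l C"
    and "basis_of_divisors C [g]"
  shows "(C = dual_code f l C \<longleftrightarrow>
            (l = 1 \<and> f = (g ! 0)^2)
          \<or> (l = 2 \<and> g ! 0 = 1 \<and> ((g ! 1)^2) mod f = (-1) mod f))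
    \<and> (C = dualR_code f l C \<longleftrightarrow>
            (l = 1 \<and> f = (g ! 0)^2)
          \<or> (l = 2 \<and> g ! 0 = 0 \<and> g ! 1 = 1)
          \<or> (l = 2 \<and> g ! 0 = 1 \<and> g ! 1 = 0)
          \<or> (l = 2 \<and> CHAR('a) = 2 \<and> g ! 0 = 1))"
proof -
  interpret bd f l C g using assms by unfold_locales
  have "l \<ge> 1" using i_less by simp
  hence "l = 1 \<or> l = 2 \<or> l \<ge> 3" by presburger
  then consider (c1) "l = 1" | (c2) "l = 2" | (c3) "l \<ge> 3" by argo
  then show ?thesis
  proof cases
    case c1
    note e1 = l1[OF c1] and e2 = l1_R[OF c1]
    show ?thesis unfolding e2 e1 using c1 by simp
  next
    case c2
    note e1 = l2a[OF c2] and e2 = l2b[OF c2]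
    show ?thesis unfolding e1 e2 using c2 by simp
  next
    case c3
    note e1 = l3_not_dual[OF c3] and e2 = l3_not_dualR[OF c3]
    have n1: "l \<noteq> 1" "l \<noteq> 2" using c3 by auto
    show ?thesis using e1 e2 n1 by simp
  qed
qed

end
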